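(* Let $H$ be an $m\times n$ binary parity-check matrix with Tanner graph $G$, let $\underline\gamma\in\mathbb R^n$, and let $\underline x$ be the (unique) optimal solution of the LP decoding problem $\min\{\underline\gamma^T\underline x:\underline x\in\mathscr P\}$, where $\mathscr P$ is the fundamental polytope. Let $F$ be the fractional subgraph of $G$ at $\underline x$, written as the disjoint union of its connected components (clusters) $F_1,\dots,F_K$. Then each cluster $F_i$ contains a cycle.
   Context: The Tanner graph $G$ of $H$ is the bipartite graph with variable nodes $1,\dots,n$, check nodes $1,\dots,m$, and an edge between check $j$ and variable $i$ iff $H_{ji}=1$; $N(j)$ is the set of variable nodes adjacent to check $j$. The fundamental polytope $\mathscr P$ is the set of $\underline x\in[0,1]^n$ such that for every $j$ and every odd-sized $V\subseteq N(j)$, $\sum_{i\in V}x_i-\sum_{i\in N(j)\setminus V}x_i\le |V|-1$. The fractional subgraph $F$ at $\underline x$ is the subgraph of $G$ consisting of the variable nodes $i$ with $0<x_i<1$, the check nodes adjacent to them, and all edges between these nodes. *)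

theory Defs
  imports Complex_Main
begin

text \<open>A binary m x n parity-check matrix is given as H :: nat \<Rightarrow> nat \<Rightarrow> bool,
  where H j i (for j < m, i < n) means H_{ji} = 1. Variable vectors are functions
  nat \<Rightarrow> real, of which only the coordinates 0..<n matter.\<close>

definition check_nbhd :: "nat \<Rightarrow> (nat \<Rightarrow> nat \<Rightarrow> bool) \<Rightarrow> nat \<Rightarrow> nat set" where
  "check_nbhd n H j = {i. i < n \<and> H j i}"

definition fundamental_polytope ::
  "nat \<Rightarrow> nat \<Rightarrow> (nat \<Rightarrow> nat \<Rightarrow> bool) \<Rightarrow> (nat \<Rightarrow> real) set" where
  "fundamental_polytope m n H =
     {x. (\<forall>i<n. 0 \<le> x i \<and> x i \<le> 1) \<and>
         (\<forall>j<m. \<forall>V. V \<subseteq> check_nbhd n H j \<and> odd (card V) \<longrightarrow>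
            (\<Sum>i\<in>V. x i) - (\<Sum>i\<in>check_nbhd n H j - V. x i) \<le> real (card V) - 1)}"

definition objective :: "nat \<Rightarrow> (nat \<Rightarrow> real) \<Rightarrow> (nat \<Rightarrow> real) \<Rightarrow> real" where
  "objective n \<gamma> x = (\<Sum>i<n. \<gamma> i * x i)"

definition unique_LP_optimum ::
  "nat \<Rightarrow> nat \<Rightarrow> (nat \<Rightarrow> nat \<Rightarrow> bool) \<Rightarrow> (nat \<Rightarrow> real) \<Rightarrow> (nat \<Rightarrow> real) \<Rightarrow> bool" where
  "unique_LP_optimum m n H \<gamma> x \<longleftrightarrow>
     x \<in> fundamental_polytope m n H \<and>
     (\<forall>y \<in> fundamental_polytope m n H. objective n \<gamma> x \<le> objective n \<gamma> y) \<and>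
     (\<forall>y \<in> fundamental_polytope m n H.
        objective n \<gamma> y = objective n \<gamma> x \<longrightarrow> (\<forall>i<n. y i = x i))"

text \<open>Tanner graph nodes: Inl i = variable node i, Inr j = check node j.\<close>
type_synonym tnode = "nat + nat"

definition tanner_adj :: "nat \<Rightarrow> nat \<Rightarrow> (nat \<Rightarrow> nat \<Rightarrow> bool) \<Rightarrow> tnode \<Rightarrow> tnode \<Rightarrow> bool" where
  "tanner_adj m n H u v \<longleftrightarrow>
     (\<exists>i j. i < n \<and> j < m \<and> H j i \<and>
        ((u = Inl i \<and> v = Inr j) \<or> (u = Inr j \<and> v = Inl i)))"

definition frac_vertices ::
  "nat \<Rightarrow> nat \<Rightarrow> (nat \<Rightarrow> nat \<Rightarrow> bool) \<Rightarrow> (nat \<Rightarrow> real) \<Rightarrow> tnode set" where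
  "frac_vertices m n H x =
     {Inl i | i. i < n \<and> 0 < x i \<and> x i < 1} \<union>
     {Inr j | j. j < m \<and> (\<exists>i<n. H j i \<and> 0 < x i \<and> x i < 1)}"

definition frac_adj ::
  "nat \<Rightarrow> nat \<Rightarrow> (nat \<Rightarrow> nat \<Rightarrow> bool) \<Rightarrow> (nat \<Rightarrow> real) \<Rightarrow> tnode \<Rightarrow> tnode \<Rightarrow> bool" where
  "frac_adj m n H x u v \<longleftrightarrow>
     u \<in> frac_vertices m n H x \<and> v \<in> frac_vertices m n H x \<and> tanner_adj m n H u v"

definition graph_components :: "'a set \<Rightarrow> ('a \<Rightarrow> 'a \<Rightarrow> bool) \<Rightarrow> 'a set set" where
  "graph_components Vs E = {{v \<in> Vs. E\<^sup>*\<^sup>* u v} | u. u \<in> Vs}"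

definition has_cycle_in :: "('a \<Rightarrow> 'a \<Rightarrow> bool) \<Rightarrow> 'a set \<Rightarrow> bool" where
  "has_cycle_in E C \<longleftrightarrow>
     (\<exists>vs. length vs \<ge> 3 \<and> distinct vs \<and> set vs \<subseteq> C \<and>
        (\<forall>k < length vs - 1. E (vs ! k) (vs ! Suc k)) \<and>
        E (last vs) (hd vs))"

end

theory Submission
  imports Defs
begin


lemma has_cycle_mono: "has_cycle_in E W' \<Longrightarrow> W' \<subseteq> W \<Longrightarrow> has_cycle_in E W"
  unfolding has_cycle_in_def by blast

lemma leaf_exists:
  assumes fin: "finite W" and ne: "W \<noteq> {}" and sym: "\<And>u v. E u v \<Longrightarrow> E v u"
    and irr: "\<And>u. \<not> E u u" and acyc: "\<not> has_cycle_in E W"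
  shows "\<exists>v\<in>W. \<forall>u1\<in>W. \<forall>u2\<in>W. E v u1 \<longrightarrow> E v u2 \<longrightarrow> u1 = u2"
proof -
  define P where "P = (\<lambda>p. p \<noteq> [] \<and> distinct p \<and> set p \<subseteq> W \<and>
      (\<forall>k < length p - 1. E (p ! k) (p ! Suc k)))"
  obtain w where w: "w \<in> W" using ne by blast
  have Pw: "P [w]" using w by (simp add: P_def)
  have bnd: "\<forall>p. P p \<longrightarrow> length p < card W + 1"
  proof (intro allI impI)
    fix p assume "P p"
    then have "distinct p" "set p \<subseteq> W" by (auto simp: P_def)
    then have "length p \<le> card W" using fin by (metis card_mono distinct_card)
    then show "length p < card W + 1" by simp
  qed
  obtain p where Pp: "P p" and mx: "\<forall>q. P q \<longrightarrow> length q \<le> length p"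
    using Lattices_Big.ex_has_greatest_nat[of P "[w]" length "card W + 1", OF Pw bnd] by blast
  have pne: "p \<noteq> []" and pd: "distinct p" and pW: "set p \<subseteq> W"
    and pE: "\<forall>k < length p - 1. E (p ! k) (p ! Suc k)" using Pp by (auto simp: P_def)
  define v where "v = last p"
  have vW: "v \<in> W" using pne pW v_def by auto
  have vlast: "p ! (length p - 1) = v" using pne v_def by (simp add: last_conv_nth)
  show ?thesis
  proof (rule bexI[OF _ vW], intro ballI impI, rule ccontr)
    fix u1 u2 assume u1: "u1 \<in> W" and u2: "u2 \<in> W" and e1: "E v u1" and e2: "E v u2" and ne12: "u1 \<noteq> u2"
    obtain u where uW: "u \<in> W" and eu: "E v u" and upred: "length p \<ge> 2 \<longrightarrow> u \<noteq> p ! (length p - 2)"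
      using u1 u2 e1 e2 ne12 by metis
    show False
    proof (cases "u \<in> set p")
      case False
      have "P (p @ [u])"
        unfolding P_def
      proof (intro conjI)
        show "\<forall>k<length (p @ [u]) - 1. E ((p @ [u]) ! k) ((p @ [u]) ! Suc k)"
        proof (intro allI impI)
          fix k assume k: "k < length (p @ [u]) - 1"
          show "E ((p @ [u]) ! k) ((p @ [u]) ! Suc k)"
          proof (cases "Suc k < length p")
            case True then show ?thesis using pE by (simp add: nth_append)
          next
            case False
            then have "k = length p - 1" using k by simp
            then show ?thesis using eu vlast pne False by (simp add: nth_append)
          qed
        qed
      qed (use False pd pW uW in auto)
      then have "length (p @ [u]) \<le> length p" using mx by blast
      then show False by simp
    next
      case True
      then obtain k where k: "k < length p" and pk: "p ! k = u" by (meson in_set_conv_nth)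
      have "k \<noteq> length p - 1" using vlast pk irr eu by auto
      moreover have "length p \<ge> 2 \<longrightarrow> k \<noteq> length p - 2" using upred pk by auto
      ultimately have k3: "k + 3 \<le> length p" using k by (cases "length p \<ge> 2") auto
      have "has_cycle_in E W"
        unfolding has_cycle_in_def
      proof (rule exI[of _ "drop k p"], intro conjI)
        show "3 \<le> length (drop k p)" using k3 by simp
        show "distinct (drop k p)" using pd by simp
        show "set (drop k p) \<subseteq> W" using pW by (meson order_trans set_drop_subset)
        show "\<forall>i<length (drop k p) - 1. E (drop k p ! i) (drop k p ! Suc i)"
          using pE k3 by auto
        show "E (last (drop k p)) (hd (drop k p))"
          using k3 pk eu v_def by (simp add: hd_drop_conv_nth)
      qed
      then show False using acyc by blast
    qed
  qed
qed



definition lhsf :: "nat set \<Rightarrow> nat set \<Rightarrow> (nat \<Rightarrow> real) \<Rightarrow> real" where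
  "lhsf N V y = (\<Sum>i\<in>V. y i) - (\<Sum>i\<in>N - V. y i)"

lemma lhsf_lin: "lhsf N V (\<lambda>i. x i + c * d i) = lhsf N V x + c * lhsf N V d"
  unfolding lhsf_def by (simp add: sum.distrib sum_distrib_left algebra_simps)

lemma lhsf_bound:
  assumes "finite N" "V \<subseteq> N"
  shows "\<bar>lhsf N V d\<bar> \<le> (\<Sum>i\<in>N. \<bar>d i\<bar>)"
proof -
  have split: "(\<Sum>i\<in>N. \<bar>d i\<bar>) = (\<Sum>i\<in>N - V. \<bar>d i\<bar>) + (\<Sum>i\<in>V. \<bar>d i\<bar>)"
    by (rule sum.subset_diff[OF assms(2,1)])
  have "\<bar>\<Sum>i\<in>V. d i\<bar> \<le> (\<Sum>i\<in>V. \<bar>d i\<bar>)" by (rule sum_abs)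
  moreover have "\<bar>\<Sum>i\<in>N - V. d i\<bar> \<le> (\<Sum>i\<in>N - V. \<bar>d i\<bar>)" by (rule sum_abs)
  ultimately show ?thesis unfolding lhsf_def split by linarith
qed

lemma dist_eq:
  assumes fin: "finite N" and sub: "V \<subseteq> N" and box: "\<forall>i\<in>N. 0 \<le> x i \<and> x i \<le> (1::real)"
  shows "(\<Sum>i\<in>N. \<bar>of_bool (i \<in> V) - x i\<bar>) = real (card V) - lhsf N V x"
proof -
  have e1: "(\<Sum>i\<in>N. \<bar>of_bool (i \<in> V) - x i\<bar>) = (\<Sum>i\<in>N - V. \<bar>of_bool (i \<in> V) - x i\<bar>) + (\<Sum>i\<in>V. \<bar>of_bool (i \<in> V) - x i\<bar>)"
    by (rule sum.subset_diff[OF sub fin])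
  have e2: "(\<Sum>i\<in>V. \<bar>of_bool (i \<in> V) - x i\<bar>) = (\<Sum>i\<in>V. 1 - x i)"
  proof (rule sum.cong[OF refl])
    fix i assume i: "i \<in> V"
    then have "x i \<le> 1" using box sub by blast
    then show "\<bar>of_bool (i \<in> V) - x i\<bar> = 1 - x i" using i by simp
  qed
  have e3: "(\<Sum>i\<in>N - V. \<bar>of_bool (i \<in> V) - x i\<bar>) = (\<Sum>i\<in>N - V. x i)"
  proof (rule sum.cong[OF refl])
    fix i assume i: "i \<in> N - V"
    then have "0 \<le> x i" using box by blast
    then show "\<bar>of_bool (i \<in> V) - x i\<bar> = x i" using i by simp
  qed
  have e4: "(\<Sum>i\<in>V. 1 - x i) = real (card V) - (\<Sum>i\<in>V. x i)"
    by (simp add: sum_subtractf)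
  show ?thesis unfolding lhsf_def using e1 e2 e3 e4 by linarith
qed
lemma two_tight:
  assumes fin: "finite N" and box: "\<forall>i\<in>N. 0 \<le> x i \<and> x i \<le> (1::real)"
    and V: "V \<subseteq> N" "odd (card V)" "lhsf N V x = real (card V) - 1"
    and V': "V' \<subseteq> N" "odd (card V')" "lhsf N V' x = real (card V') - 1"
    and i0: "i0 \<in> N" "0 < x i0" "x i0 < 1" "i0 \<in> V \<longleftrightarrow> i0 \<in> V'"
  shows "V = V'"
proof -
  have d1: "(\<Sum>i\<in>N. \<bar>of_bool (i \<in> V) - x i\<bar>) = 1" using dist_eq[OF fin V(1) box] V(3) by simp
  have d2: "(\<Sum>i\<in>N. \<bar>of_bool (i \<in> V') - x i\<bar>) = 1" using dist_eq[OF fin V'(1) box] V'(3) by simp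
  have "(\<Sum>i\<in>N. \<bar>of_bool (i \<in> V) - of_bool (i \<in> V')\<bar>) <
        (\<Sum>i\<in>N. \<bar>of_bool (i \<in> V) - x i\<bar> + \<bar>of_bool (i \<in> V') - x i\<bar>)"
  proof (rule sum_strict_mono_ex1[OF fin])
    show "\<forall>i\<in>N. \<bar>of_bool (i \<in> V) - of_bool (i \<in> V')\<bar> \<le> \<bar>of_bool (i \<in> V) - x i\<bar> + \<bar>of_bool (i \<in> V') - (x i::real)\<bar>"
      by auto
    show "\<exists>i\<in>N. \<bar>of_bool (i \<in> V) - of_bool (i \<in> V')\<bar> < \<bar>of_bool (i \<in> V) - x i\<bar> + \<bar>of_bool (i \<in> V') - (x i::real)\<bar>"
      using i0 by (intro bexI[of _ i0]) auto
  qed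
  also have "\<dots> = 2" using d1 d2 by (simp add: sum.distrib)
  finally have lt2: "(\<Sum>i\<in>N. \<bar>of_bool (i \<in> V) - of_bool (i \<in> V')\<bar>) < (2::real)" .
  have "(\<Sum>i\<in>N. \<bar>of_bool (i \<in> V) - of_bool (i \<in> V')\<bar>) = (\<Sum>i\<in>N. of_bool (i \<in> V - V') + (of_bool (i \<in> V' - V)::real))"
    by (intro sum.cong) auto
  also have "\<dots> = real (card (V - V')) + real (card (V' - V))"
  proof -
    have "N \<inter> {i. i \<in> V - V'} = V - V'" "N \<inter> {i. i \<in> V' - V} = V' - V" using V(1) V'(1) by auto
    then show ?thesis using fin by (simp add: sum.distrib)
  qed
  finally have "real (card (V - V')) + real (card (V' - V)) < 2" using lt2 by simp
  then have le1: "card (V - V') + card (V' - V) \<le> 1" by linarith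
  have finV: "finite V" "finite V'" using fin V(1) V'(1) finite_subset by auto
  have cV: "card V = card (V - V') + card (V \<inter> V')"
    using card_Int_Diff[OF finV(1), of V'] by simp
  have cV': "card V' = card (V' - V) + card (V \<inter> V')"
    using card_Int_Diff[OF finV(2), of V] by (simp add: Int_commute)
  have "even (card (V - V') + card (V' - V))" using cV cV' V(2) V'(2) by presburger
  then have "card (V - V') + card (V' - V) = 0" using le1 by presburger
  then have "V - V' = {}" "V' - V = {}" using finV by auto
  then show ?thesis by blast
qed


lemma two_frac:
  assumes fin: "finite N" and box: "\<forall>i\<in>N. 0 \<le> x i \<and> x i \<le> (1::real)"
    and cons: "\<forall>V. V \<subseteq> N \<and> odd (card V) \<longrightarrow> lhsf N V x \<le> real (card V) - 1"
    and i0: "i0 \<in> N" "0 < x i0" "x i0 < 1"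
  shows "\<exists>i\<in>N. i \<noteq> i0 \<and> 0 < x i \<and> x i < 1"
proof (rule ccontr)
  assume "\<not> ?thesis"
  then have int: "\<forall>i\<in>N. i \<noteq> i0 \<longrightarrow> x i = 0 \<or> x i = 1" using box by fastforce
  define I1 where "I1 = {i\<in>N. i \<noteq> i0 \<and> x i = 1}"
  have I1N: "I1 \<subseteq> N" and i0I1: "i0 \<notin> I1" using I1_def by auto
  have finI1: "finite I1" using fin I1N finite_subset by auto
  have sI1: "(\<Sum>i\<in>I1. x i) = real (card I1)" using I1_def by simp
  have zero: "\<forall>i\<in>N - insert i0 I1. x i = 0" using int I1_def by auto
  have s0: "(\<Sum>i\<in>N - insert i0 I1. x i) = 0" using zero by simp
  show False
  proof (cases "odd (card I1)")
    case True
    have "(\<Sum>i\<in>N - I1. x i) = x i0 + (\<Sum>i\<in>N - I1 - {i0}. x i)"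
      using fin i0 i0I1 by (intro sum.remove) auto
    moreover have "N - I1 - {i0} = N - insert i0 I1" by auto
    ultimately have "(\<Sum>i\<in>N - I1. x i) = x i0 + (\<Sum>i\<in>N - insert i0 I1. x i)" by simp
    then have "lhsf N I1 x = real (card I1) - x i0" using s0 sI1 unfolding lhsf_def by simp
    moreover have "lhsf N I1 x \<le> real (card I1) - 1" using cons I1N True by blast
    ultimately show False using i0 by simp
  next
    case False
    let ?V = "insert i0 I1"
    have cV: "card ?V = card I1 + 1" using finI1 i0I1 by simp
    have "(\<Sum>i\<in>?V. x i) = x i0 + real (card I1)" using finI1 i0I1 sI1 by simp
    then have "lhsf N ?V x = x i0 + real (card I1)" using s0 unfolding lhsf_def by simp
    moreover have "lhsf N ?V x \<le> real (card ?V) - 1"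
    proof -
      have "?V \<subseteq> N" "odd (card ?V)" using I1N i0 cV False by auto
      then show ?thesis using cons by blast
    qed
    ultimately show False using i0 cV by simp
  qed
qed


lemma nbhd_sub: "check_nbhd n H j \<subseteq> {..<n}" and nbhd_fin: "finite (check_nbhd n H j)"
  unfolding check_nbhd_def by auto

lemma polytope_iff:
  "y \<in> fundamental_polytope m n H \<longleftrightarrow>
     (\<forall>i<n. 0 \<le> y i \<and> y i \<le> 1) \<and>
     (\<forall>j<m. \<forall>V. V \<subseteq> check_nbhd n H j \<and> odd (card V) \<longrightarrow>
        lhsf (check_nbhd n H j) V y \<le> real (card V) - 1)"
  unfolding fundamental_polytope_def lhsf_def by simp

lemma perturb:
  assumes xP: "x \<in> fundamental_polytope m n H"
    and dsupp: "\<forall>i. dd i \<noteq> 0 \<longrightarrow> i < n \<and> 0 < x i \<and> x i < 1"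
    and dtight: "\<forall>j<m. \<forall>V. V \<subseteq> check_nbhd n H j \<and> odd (card V) \<and>
        lhsf (check_nbhd n H j) V x = real (card V) - 1 \<longrightarrow> lhsf (check_nbhd n H j) V dd = 0"
  shows "\<exists>\<epsilon>>0. \<forall>t. \<bar>t\<bar> \<le> \<epsilon> \<longrightarrow> (\<lambda>i. x i + t * dd i) \<in> fundamental_polytope m n H"
proof -
  let ?N = "check_nbhd n H"
  have xbox: "\<forall>i<n. 0 \<le> x i \<and> x i \<le> 1" and xcons: "\<forall>j<m. \<forall>V. V \<subseteq> ?N j \<and> odd (card V) \<longrightarrow>
        lhsf (?N j) V x \<le> real (card V) - 1" using xP unfolding polytope_iff by auto
  define M where "M = (\<Sum>i<n. \<bar>dd i\<bar>)"
  have M0: "M \<ge> 0" unfolding M_def by (simp add: sum_nonneg)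
  have Mlhs: "\<bar>lhsf (?N j) V dd\<bar> \<le> M" if "V \<subseteq> ?N j" for j V
  proof -
    have "\<bar>lhsf (?N j) V dd\<bar> \<le> (\<Sum>i\<in>?N j. \<bar>dd i\<bar>)" by (rule lhsf_bound[OF nbhd_fin that])
    also have "\<dots> \<le> M" unfolding M_def by (rule sum_mono2) (use nbhd_sub in auto)
    finally show ?thesis .
  qed
  have Mdd: "\<bar>dd i\<bar> \<le> M" for i
  proof (cases "i < n")
    case True then show ?thesis unfolding M_def by (intro member_le_sum) auto
  next
    case False then have "dd i = 0" using dsupp by blast
    then show ?thesis using M0 by simp
  qed
  define Idx where "Idx = {(j,V). j < m \<and> V \<subseteq> ?N j \<and> odd (card V) \<and> lhsf (?N j) V x \<noteq> real (card V) - 1}"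
  define F where "F = {i. i < n \<and> 0 < x i \<and> x i < 1}"
  define S where "S = (\<lambda>(j,V). real (card V) - 1 - lhsf (?N j) V x) ` Idx \<union> x ` F \<union> (\<lambda>i. 1 - x i) ` F"
  have "Idx \<subseteq> {..<m} \<times> Pow {..<n}"
  proof
    fix p assume "p \<in> Idx"
    then obtain j V where "p = (j,V)" "j < m" "V \<subseteq> ?N j" unfolding Idx_def by auto
    then show "p \<in> {..<m} \<times> Pow {..<n}" using nbhd_sub[of n H j] by auto
  qed
  then have finIdx: "finite Idx" by (rule finite_subset) auto
  have finF: "finite F" unfolding F_def by auto
  have finS: "finite S" unfolding S_def using finIdx finF by auto
  have Spos: "\<forall>s\<in>S. 0 < s"
  proof
    fix s assume "s \<in> S"
    then consider (a) j V where "(j,V) \<in> Idx" "s = real (card V) - 1 - lhsf (?N j) V x"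
      | (b) i where "i \<in> F" "s = x i" | (c) i where "i \<in> F" "s = 1 - x i"
      unfolding S_def by auto
    then show "0 < s"
    proof cases
      case a
      then have "j < m" "V \<subseteq> ?N j" "odd (card V)" "lhsf (?N j) V x \<noteq> real (card V) - 1"
        unfolding Idx_def by auto
      then have "lhsf (?N j) V x \<le> real (card V) - 1" "lhsf (?N j) V x \<noteq> real (card V) - 1"
        using xcons by blast+
      then have "lhsf (?N j) V x < real (card V) - 1" by linarith
      then show ?thesis using a by simp
    qed (auto simp: F_def)
  qed
  define \<delta> where "\<delta> = Min (insert 1 S)"
  have \<delta>pos: "\<delta> > 0" unfolding \<delta>_def using finS Spos by (simp add: Min_gr_iff)
  have \<delta>le: "\<delta> \<le> s" if "s \<in> S" for s unfolding \<delta>_def using finS that by simp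
  define \<epsilon> where "\<epsilon> = \<delta> / (M + 1)"
  have \<epsilon>pos: "\<epsilon> > 0" unfolding \<epsilon>_def using \<delta>pos M0 by simp
  have \<epsilon>M: "\<epsilon> * M < \<delta>"
  proof -
    have "\<epsilon> * M = \<delta> * (M / (M + 1))" unfolding \<epsilon>_def by simp
    also have "\<dots> < \<delta> * 1" using \<delta>pos M0 by (intro mult_strict_left_mono) auto
    finally show ?thesis by simp
  qed
  have main: "(\<lambda>i. x i + t * dd i) \<in> fundamental_polytope m n H" if t: "\<bar>t\<bar> \<le> \<epsilon>" for t
  proof -
    have tM: "\<bar>t\<bar> * M < \<delta>"
      using t M0 \<epsilon>M by (meson le_less_trans mult_right_mono)
    have tdd: "\<bar>t * dd i\<bar> < \<delta>" for i
    proof -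
      have "\<bar>t * dd i\<bar> = \<bar>t\<bar> * \<bar>dd i\<bar>" by (simp add: abs_mult)
      also have "\<dots> \<le> \<bar>t\<bar> * M" using Mdd by (simp add: mult_left_mono)
      finally show ?thesis using tM by simp
    qed
    have box: "\<forall>i<n. 0 \<le> x i + t * dd i \<and> x i + t * dd i \<le> 1"
    proof (intro allI impI)
      fix i assume i: "i < n"
      show "0 \<le> x i + t * dd i \<and> x i + t * dd i \<le> 1"
      proof (cases "dd i = 0")
        case True then show ?thesis using xbox i by simp
      next
        case False
        then have iF: "i \<in> F" using dsupp F_def by auto
        have "\<delta> \<le> x i" "\<delta> \<le> 1 - x i" using \<delta>le iF S_def by auto
        then show ?thesis using tdd[of i] by (auto simp: abs_less_iff)
      qed
    qed
    have cons: "\<forall>j<m. \<forall>V. V \<subseteq> ?N j \<and> odd (card V) \<longrightarrow>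
        lhsf (?N j) V (\<lambda>i. x i + t * dd i) \<le> real (card V) - 1"
    proof (intro allI impI)
      fix j V assume j: "j < m" and V: "V \<subseteq> ?N j \<and> odd (card V)"
      have lin: "lhsf (?N j) V (\<lambda>i. x i + t * dd i) = lhsf (?N j) V x + t * lhsf (?N j) V dd"
        by (rule lhsf_lin)
      show "lhsf (?N j) V (\<lambda>i. x i + t * dd i) \<le> real (card V) - 1"
      proof (cases "lhsf (?N j) V x = real (card V) - 1")
        case True
        then have "lhsf (?N j) V dd = 0" using dtight j V by blast
        then show ?thesis using lin True by simp
      next
        case False
        then have "(j,V) \<in> Idx" unfolding Idx_def using j V by auto
        then have sl: "\<delta> \<le> real (card V) - 1 - lhsf (?N j) V x" using \<delta>le S_def by fastforce
        have "\<bar>t * lhsf (?N j) V dd\<bar> \<le> \<bar>t\<bar> * M"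
          using Mlhs[of V j] V by (simp add: abs_mult mult_left_mono)
        then show ?thesis using lin sl tM by (auto simp: abs_le_iff)
      qed
    qed
    show ?thesis unfolding polytope_iff using box cons by blast
  qed
  show ?thesis using \<epsilon>pos main by blast
qed



lemma forest_kernel:
  fixes E :: "'a \<Rightarrow> 'a \<Rightarrow> bool" and a :: "'a \<Rightarrow> 'a \<Rightarrow> real"
  assumes "finite X" "finite Y" "X \<noteq> {}"
    "\<And>u v. E u v \<Longrightarrow> E v u" "\<And>u. \<not> E u u"
    "\<forall>c\<in>Y. \<exists>u1\<in>X. \<exists>u2\<in>X. u1 \<noteq> u2 \<and> E c u1 \<and> E c u2"
    "\<forall>c\<in>Y. \<forall>u\<in>X. a c u \<noteq> 0"
    "\<not> has_cycle_in E (X \<union> Y)"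
  shows "\<exists>d. (\<exists>v\<in>X. d v \<noteq> 0) \<and> (\<forall>v. v \<notin> X \<longrightarrow> d v = 0) \<and>
            (\<forall>c\<in>Y. (\<Sum>u\<in>{u\<in>X. E c u}. a c u * d u) = 0)"
  using assms
proof (induction "card X" arbitrary: X Y rule: less_induct)
  case less
  note finX = less.prems(1) and finY = less.prems(2) and neX = less.prems(3)
    and sym = less.prems(4) and irr = less.prems(5) and deg = less.prems(6)
    and anz = less.prems(7) and acyc = less.prems(8)
  obtain v where vW: "v \<in> X \<union> Y" and leaf: "\<forall>u1\<in>X \<union> Y. \<forall>u2\<in>X \<union> Y. E v u1 \<longrightarrow> E v u2 \<longrightarrow> u1 = u2"
    using leaf_exists[of "X \<union> Y" E] finX finY neX sym irr acyc by blast
  have vX: "v \<in> X"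
  proof (rule ccontr)
    assume "v \<notin> X"
    then have "v \<in> Y" using vW by blast
    then obtain u1 u2 where "u1 \<in> X" "u2 \<in> X" "u1 \<noteq> u2" "E v u1" "E v u2" using deg by blast
    then show False using leaf by blast
  qed
  show ?case
  proof (cases "\<exists>c\<in>Y. E v c")
    case False
    define d where "d = (\<lambda>u. if u = v then (1::real) else 0)"
    have "\<forall>c\<in>Y. (\<Sum>u\<in>{u\<in>X. E c u}. a c u * d u) = 0"
    proof
      fix c assume c: "c \<in> Y"
      have "\<forall>u\<in>{u\<in>X. E c u}. a c u * d u = 0"
        using False c sym by (auto simp: d_def)
      then show "(\<Sum>u\<in>{u\<in>X. E c u}. a c u * d u) = 0" by (meson sum.neutral)
    qed
    then show ?thesis using vX by (intro exI[of _ d]) (auto simp: d_def)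
  next
    case True
    then obtain c where cY: "c \<in> Y" and vc: "E v c" by blast
    have only: "\<And>c'. c' \<in> Y \<Longrightarrow> E v c' \<Longrightarrow> c' = c" using leaf cY vc by blast
    define X' where "X' = X - {v}"
    define Y' where "Y' = (if \<exists>u1\<in>X'. \<exists>u2\<in>X'. u1 \<noteq> u2 \<and> E c u1 \<and> E c u2 then Y else Y - {c})"
    have cardlt: "card X' < card X" using finX vX X'_def by (metis card_Diff1_less)
    have finX': "finite X'" using finX X'_def by simp
    have finY': "finite Y'" using finY Y'_def by simp
    have neX': "X' \<noteq> {}"
    proof -
      obtain u1 u2 where "u1 \<in> X" "u2 \<in> X" "u1 \<noteq> u2" using deg cY by blast
      then show ?thesis using X'_def by blast
    qed
    have deg': "\<forall>c'\<in>Y'. \<exists>u1\<in>X'. \<exists>u2\<in>X'. u1 \<noteq> u2 \<and> E c' u1 \<and> E c' u2"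
    proof
      fix c' assume c': "c' \<in> Y'"
      show "\<exists>u1\<in>X'. \<exists>u2\<in>X'. u1 \<noteq> u2 \<and> E c' u1 \<and> E c' u2"
      proof (cases "c' = c")
        case True then show ?thesis using c' Y'_def by (auto split: if_splits)
      next
        case False
        have "c' \<in> Y" using c' Y'_def by (auto split: if_splits)
        then obtain u1 u2 where "u1 \<in> X" "u2 \<in> X" "u1 \<noteq> u2" "E c' u1" "E c' u2" using deg by blast
        moreover have "u1 \<noteq> v" "u2 \<noteq> v" using calculation only False sym \<open>c' \<in> Y\<close> by blast+
        ultimately show ?thesis using X'_def by blast
      qed
    qed
    have anz': "\<forall>c\<in>Y'. \<forall>u\<in>X'. a c u \<noteq> 0" using anz X'_def Y'_def by (auto split: if_splits)
    have acyc': "\<not> has_cycle_in E (X' \<union> Y')"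
      using acyc has_cycle_mono[of E "X' \<union> Y'" "X \<union> Y"] X'_def Y'_def by (auto split: if_splits)
    obtain d' where d'nz: "\<exists>w\<in>X'. d' w \<noteq> 0" and d'out: "\<forall>w. w \<notin> X' \<longrightarrow> d' w = 0"
      and d'sum: "\<forall>c\<in>Y'. (\<Sum>u\<in>{u\<in>X'. E c u}. a c u * d' u) = 0"
      using less.hyps[OF cardlt finX' finY' neX' sym irr deg' anz' acyc'] by blast
    define val where "val = - (\<Sum>u\<in>{u\<in>X'. E c u}. a c u * d' u) / a c v"
    define d where "d = d'(v := val)"
    have acv: "a c v \<noteq> 0" using anz cY vX by blast
    have s1: "\<exists>w\<in>X. d w \<noteq> 0" using d'nz X'_def d_def by auto
    have s2: "\<forall>w. w \<notin> X \<longrightarrow> d w = 0" using d'out X'_def d_def vX by auto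
    have s3: "\<forall>c'\<in>Y. (\<Sum>u\<in>{u\<in>X. E c' u}. a c' u * d u) = 0"
    proof
      fix c' assume c': "c' \<in> Y"
      have eqX': "(\<Sum>u\<in>{u\<in>X'. E c' u}. a c' u * d u) = (\<Sum>u\<in>{u\<in>X'. E c' u}. a c' u * d' u)"
        by (rule sum.cong) (auto simp: d_def X'_def)
      show "(\<Sum>u\<in>{u\<in>X. E c' u}. a c' u * d u) = 0"
      proof (cases "c' = c")
        case False
        have "\<not> E c' v" using only c' False sym by blast
        then have "{u\<in>X. E c' u} = {u\<in>X'. E c' u}" using X'_def by auto
        moreover have "c' \<in> Y'" using c' False Y'_def by auto
        ultimately show ?thesis using eqX' d'sum by simp
      next
        case True
        have "{u\<in>X. E c' u} = insert v {u\<in>X'. E c' u}" using True vX vc sym X'_def by auto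
        then have "(\<Sum>u\<in>{u\<in>X. E c' u}. a c' u * d u) = a c' v * d v + (\<Sum>u\<in>{u\<in>X'. E c' u}. a c' u * d u)"
          using finX' X'_def by (simp add: sum.insert)
        also have "\<dots> = a c v * val + (\<Sum>u\<in>{u\<in>X'. E c u}. a c u * d' u)"
          using eqX' True d_def by simp
        also have "\<dots> = 0" using acv val_def by simp
        finally show ?thesis .
      qed
    qed
    show ?thesis using s1 s2 s3 by blast
  qed
qed



lemma lhsf_sgn:
  assumes "finite N" "V \<subseteq> N"
  shows "lhsf N V y = (\<Sum>i\<in>N. if i \<in> V then y i else - y i)"
proof -
  have "(\<Sum>i\<in>N. if i \<in> V then y i else - y i) = (\<Sum>i\<in>N - V. if i \<in> V then y i else - y i) + (\<Sum>i\<in>V. if i \<in> V then y i else - y i)"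
    by (rule sum.subset_diff[OF assms(2,1)])
  also have "(\<Sum>i\<in>N - V. if i \<in> V then y i else - y i) = (\<Sum>i\<in>N - V. - y i)" by (rule sum.cong) auto
  also have "(\<Sum>i\<in>V. if i \<in> V then y i else - y i) = (\<Sum>i\<in>V. y i)" by (rule sum.cong) auto
  finally show ?thesis unfolding lhsf_def by (simp add: sum_negf)
qed

lemma objective_lin: "objective n \<gamma> (\<lambda>i. x i + t * d i) = objective n \<gamma> x + t * (\<Sum>i<n. \<gamma> i * d i)"
  unfolding objective_def by (simp add: sum.distrib sum_distrib_left algebra_simps)


theorem theorem4:
  fixes m n :: nat and H :: "nat \<Rightarrow> nat \<Rightarrow> bool"
    and \<gamma> x :: "nat \<Rightarrow> real"
  assumes "unique_LP_optimum m n H \<gamma> x"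
  shows "\<forall>C \<in> graph_components (frac_vertices m n H x) (frac_adj m n H x).
           has_cycle_in (frac_adj m n H x) C"
proof
  let ?FV = "frac_vertices m n H x"
  let ?E = "frac_adj m n H x"
  let ?N = "check_nbhd n H"
  fix C assume C: "C \<in> graph_components ?FV ?E"
  show "has_cycle_in ?E C"
  proof (rule ccontr)
    assume acyc: "\<not> has_cycle_in ?E C"
    obtain u0 where u0: "u0 \<in> ?FV" and Ceq: "C = {v \<in> ?FV. ?E\<^sup>*\<^sup>* u0 v}"
      using C unfolding graph_components_def by blast
    have CFV: "C \<subseteq> ?FV" unfolding Ceq by blast
    have u0C: "u0 \<in> C" unfolding Ceq using u0 by simp
    have closed: "w \<in> C" if vC: "v \<in> C" and vw: "?E v w" for v w
    proof -
      have r: "?E\<^sup>*\<^sup>* u0 v" using vC unfolding Ceq by simp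
      have "w \<in> ?FV" using vw unfolding frac_adj_def by blast
      moreover have "?E\<^sup>*\<^sup>* u0 w" using rtranclp.rtrancl_into_rtrancl[OF r vw] .
      ultimately show ?thesis unfolding Ceq by simp
    qed
    have xP: "x \<in> fundamental_polytope m n H"
      and opt: "\<forall>y \<in> fundamental_polytope m n H. objective n \<gamma> x \<le> objective n \<gamma> y"
      and uniq: "\<forall>y \<in> fundamental_polytope m n H. objective n \<gamma> y = objective n \<gamma> x \<longrightarrow> (\<forall>i<n. y i = x i)"
      using assms unfolding unique_LP_optimum_def by auto
    have xbox: "\<forall>i<n. 0 \<le> x i \<and> x i \<le> 1" and xcons: "\<forall>j<m. \<forall>V. V \<subseteq> ?N j \<and> odd (card V) \<longrightarrow>
        lhsf (?N j) V x \<le> real (card V) - 1" using xP unfolding polytope_iff by auto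
    have boxN: "\<forall>i\<in>?N j. 0 \<le> x i \<and> x i \<le> 1" for j using xbox nbhd_sub by blast
    have inlFV: "Inl i \<in> ?FV \<longleftrightarrow> i < n \<and> 0 < x i \<and> x i < 1" for i
      unfolding frac_vertices_def by auto
    have inrFV: "Inr j \<in> ?FV \<longleftrightarrow> j < m \<and> (\<exists>i<n. H j i \<and> 0 < x i \<and> x i < 1)" for j
      unfolding frac_vertices_def by auto
    have E1: "?E (Inr j) (Inl i) \<longleftrightarrow> Inr j \<in> ?FV \<and> Inl i \<in> ?FV \<and> i < n \<and> j < m \<and> H j i" for i j
      unfolding frac_adj_def tanner_adj_def by auto
    have E2: "?E (Inl i) (Inr j) \<longleftrightarrow> Inr j \<in> ?FV \<and> Inl i \<in> ?FV \<and> i < n \<and> j < m \<and> H j i" for i j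
      unfolding frac_adj_def tanner_adj_def by auto
    have E3: "\<not> ?E (Inl i) (Inl i')" "\<not> ?E (Inr j) (Inr j')" for i i' j j'
      unfolding frac_adj_def tanner_adj_def by auto
    have Esym: "\<And>u v. ?E u v \<Longrightarrow> ?E v u" unfolding frac_adj_def tanner_adj_def by blast
    have Eirr: "\<And>u. \<not> ?E u u" unfolding frac_adj_def tanner_adj_def by auto
    have finFV: "finite ?FV"
    proof (rule finite_subset)
      show "?FV \<subseteq> Inl ` {..<n} \<union> Inr ` {..<m}" unfolding frac_vertices_def by auto
    qed auto
    define X where "X = {v\<in>C. isl v}"
    define Y where "Y = {v\<in>C. \<not> isl v}"
    have XY: "X \<union> Y = C" unfolding X_def Y_def by auto
    have finC: "finite C" using finFV CFV finite_subset by auto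
    have finX: "finite X" "finite Y" using finC X_def Y_def by auto
    have XInl: "v \<in> X \<Longrightarrow> \<exists>i. v = Inl i \<and> i < n \<and> 0 < x i \<and> x i < 1" for v
      using CFV inlFV unfolding X_def by (cases v) auto
    have YInr: "v \<in> Y \<Longrightarrow> \<exists>j. v = Inr j \<and> Inr j \<in> C" for v
      unfolding Y_def by (cases v) auto
    have neX: "X \<noteq> {}"
    proof (cases u0)
      case (Inl i) then show ?thesis using u0C X_def by auto
    next
      case (Inr j)
      then obtain i where "i < n" "H j i" "0 < x i" "x i < 1" "j < m" using u0 inrFV by auto
      then have "?E u0 (Inl i)" using E1 Inr u0 inlFV by auto
      then have "Inl i \<in> C" using closed u0C by blast
      then show ?thesis using X_def by auto
    qed
    have deg: "\<forall>c\<in>Y. \<exists>u1\<in>X. \<exists>u2\<in>X. u1 \<noteq> u2 \<and> ?E c u1 \<and> ?E c u2"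
    proof
      fix c assume cY: "c \<in> Y"
      then obtain j where cj: "c = Inr j" and jC: "Inr j \<in> C" using YInr by blast
      then have jFV: "Inr j \<in> ?FV" using CFV by blast
      then obtain i where i: "i < n" "H j i" "0 < x i" "x i < 1" and jm: "j < m" using inrFV by auto
      have iN: "i \<in> ?N j" using i unfolding check_nbhd_def by auto
      have consj: "\<forall>V. V \<subseteq> ?N j \<and> odd (card V) \<longrightarrow> lhsf (?N j) V x \<le> real (card V) - 1"
        using xcons jm by blast
      obtain i' where i': "i' \<in> ?N j" "i' \<noteq> i" "0 < x i'" "x i' < 1"
        using two_frac[OF nbhd_fin boxN consj iN i(3,4)] by blast
      have i'2: "i' < n" "H j i'" using i'(1) unfolding check_nbhd_def by auto
      have e1: "?E c (Inl i)" using E1 cj jFV inlFV i jm by auto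
      have e2: "?E c (Inl i')" using E1 cj jFV inlFV i' i'2 jm by auto
      have "Inl i \<in> X" "Inl i' \<in> X" using closed e1 e2 cY Y_def X_def by auto
      then show "\<exists>u1\<in>X. \<exists>u2\<in>X. u1 \<noteq> u2 \<and> ?E c u1 \<and> ?E c u2" using e1 e2 i' by blast
    qed
    define tight where "tight = (\<lambda>j V. V \<subseteq> ?N j \<and> odd (card V) \<and> lhsf (?N j) V x = real (card V) - 1)"
    define Vt where "Vt = (\<lambda>j. SOME V. tight j V)"
    define a :: "tnode \<Rightarrow> tnode \<Rightarrow> real" where "a = (\<lambda>c u. if projl u \<in> Vt (projr c) then (1::real) else -1)"
    have anz: "\<forall>c\<in>Y. \<forall>u\<in>X. a c u \<noteq> 0" unfolding a_def by auto
    have acyc': "\<not> has_cycle_in ?E (X \<union> Y)" using acyc XY by simp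
    obtain d where dnz: "\<exists>v\<in>X. d v \<noteq> 0" and dout: "\<forall>v. v \<notin> X \<longrightarrow> d v = 0"
      and dsum: "\<forall>c\<in>Y. (\<Sum>u\<in>{u\<in>X. ?E c u}. a c u * d u) = 0"
      using forest_kernel[OF finX neX Esym Eirr deg anz acyc'] by blast
    define dd where "dd = (\<lambda>i. d (Inl i))"
    have dsupp: "\<forall>i. dd i \<noteq> 0 \<longrightarrow> i < n \<and> 0 < x i \<and> x i < 1"
    proof (intro allI impI)
      fix i assume "dd i \<noteq> 0"
      then have "Inl i \<in> X" using dout dd_def by auto
      then show "i < n \<and> 0 < x i \<and> x i < 1" using XInl by blast
    qed
    have dtight: "\<forall>j<m. \<forall>V. tight j V \<longrightarrow> lhsf (?N j) V dd = 0"
    proof (intro allI impI)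
      fix j V assume jm: "j < m" and tV: "tight j V"
      show "lhsf (?N j) V dd = 0"
      proof (cases "Inr j \<in> C")
        case False
        have "\<forall>i\<in>?N j. dd i = 0"
        proof (rule ballI, rule ccontr)
          fix i assume iN: "i \<in> ?N j" and nz: "dd i \<noteq> 0"
          then have iX: "Inl i \<in> X" using dout dd_def by auto
          then have iC: "Inl i \<in> C" using X_def by auto
          have ifr: "i < n" "0 < x i" "x i < 1" using XInl[OF iX] by auto
          have Hji: "H j i" using iN unfolding check_nbhd_def by auto
          have "Inr j \<in> ?FV" using inrFV jm ifr Hji by blast
          then have "?E (Inl i) (Inr j)" using E2 ifr Hji jm inlFV by auto
          then show False using closed iC False by blast
        qed
        moreover have "V \<subseteq> ?N j" using tV unfolding tight_def by simp
        ultimately have "\<forall>i\<in>V. dd i = 0" "\<forall>i\<in>?N j - V. dd i = 0" by auto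
        then show ?thesis unfolding lhsf_def by simp
      next
        case True
        then have cY: "Inr j \<in> Y" using Y_def by auto
        have tVt: "tight j (Vt j)" unfolding Vt_def using tV by (rule someI)
        have jFV: "Inr j \<in> ?FV" using True CFV by blast
        have set_eq: "{u\<in>X. ?E (Inr j) u} = Inl ` {i\<in>?N j. Inl i \<in> X}"
        proof
          show "{u\<in>X. ?E (Inr j) u} \<subseteq> Inl ` {i\<in>?N j. Inl i \<in> X}"
          proof
            fix u assume u: "u \<in> {u\<in>X. ?E (Inr j) u}"
            then obtain i where ui: "u = Inl i" using XInl by blast
            then have "i \<in> ?N j" using u E1 unfolding check_nbhd_def by auto
            then show "u \<in> Inl ` {i\<in>?N j. Inl i \<in> X}" using u ui by auto
          qed
          show "Inl ` {i\<in>?N j. Inl i \<in> X} \<subseteq> {u\<in>X. ?E (Inr j) u}"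
          proof
            fix u :: tnode assume "u \<in> Inl ` {i\<in>?N j. Inl i \<in> X}"
            then obtain i where ui: "u = Inl i" and iN: "i \<in> ?N j" and iX: "Inl i \<in> X" by auto
            have "Inl i \<in> ?FV" using iX X_def CFV by auto
            then have "?E (Inr j) (Inl i)" using E1 jFV jm iN unfolding check_nbhd_def by auto
            then show "u \<in> {u\<in>X. ?E (Inr j) u}" using ui iX by auto
          qed
        qed
        define sg where "sg = (\<lambda>W i. if i \<in> W then dd i else - dd i)"
        have "0 = (\<Sum>u\<in>{u\<in>X. ?E (Inr j) u}. a (Inr j) u * d u)" using dsum cY by simp
        also have "\<dots> = (\<Sum>i\<in>{i\<in>?N j. Inl i \<in> X}. a (Inr j) (Inl i) * d (Inl i))"
          unfolding set_eq by (subst sum.reindex) (auto simp: inj_on_def)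
        also have "\<dots> = (\<Sum>i\<in>{i\<in>?N j. Inl i \<in> X}. sg (Vt j) i)"
          by (rule sum.cong) (auto simp: a_def sg_def dd_def)
        also have "\<dots> = (\<Sum>i\<in>?N j. sg (Vt j) i)"
        proof (rule sum.mono_neutral_left[OF nbhd_fin])
          show "\<forall>i\<in>?N j - {i\<in>?N j. Inl i \<in> X}. sg (Vt j) i = 0"
            using dout unfolding sg_def dd_def by auto
        qed auto
        also have "\<dots> = lhsf (?N j) (Vt j) dd"
          using lhsf_sgn[OF nbhd_fin] tVt unfolding tight_def sg_def by simp
        finally have z: "lhsf (?N j) (Vt j) dd = 0" by simp
        show ?thesis
        proof (cases "V = Vt j")
          case True then show ?thesis using z by simp
        next
          case False
          have flip: "sg V i = - sg (Vt j) i" if iN: "i \<in> ?N j" for i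
          proof (cases "dd i = 0")
            case True then show ?thesis unfolding sg_def by simp
          next
            case nz: False
            then have ifr: "0 < x i" "x i < 1" using dsupp by auto
            have "\<not> (i \<in> V \<longleftrightarrow> i \<in> Vt j)"
            proof
              assume "i \<in> V \<longleftrightarrow> i \<in> Vt j"
              then have "V = Vt j"
                using two_tight[OF nbhd_fin boxN, of V j "Vt j" i] tV tVt iN ifr
                unfolding tight_def by blast
              then show False using False by simp
            qed
            then show ?thesis unfolding sg_def by auto
          qed
          have "lhsf (?N j) V dd = (\<Sum>i\<in>?N j. sg V i)"
            using lhsf_sgn[OF nbhd_fin] tV unfolding tight_def sg_def by simp
          also have "\<dots> = (\<Sum>i\<in>?N j. - sg (Vt j) i)" using flip by (rule sum.cong[OF refl])
          also have "\<dots> = - lhsf (?N j) (Vt j) dd"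
            using lhsf_sgn[OF nbhd_fin] tVt unfolding tight_def sg_def by (simp add: sum_negf)
          finally show ?thesis using z by simp
        qed
      qed
    qed
    obtain \<epsilon> where \<epsilon>pos: "\<epsilon> > 0"
      and pert: "\<forall>t. \<bar>t\<bar> \<le> \<epsilon> \<longrightarrow> (\<lambda>i. x i + t * dd i) \<in> fundamental_polytope m n H"
      using perturb[OF xP dsupp] dtight unfolding tight_def by blast
    define g where "g = (\<Sum>i<n. \<gamma> i * dd i)"
    have p1: "(\<lambda>i. x i + \<epsilon> * dd i) \<in> fundamental_polytope m n H" using pert \<epsilon>pos by simp
    have ae: "\<bar>- \<epsilon>\<bar> \<le> \<epsilon>" using \<epsilon>pos by simp
    have p2: "(\<lambda>i. x i + (- \<epsilon>) * dd i) \<in> fundamental_polytope m n H" using pert ae by blast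
    have "objective n \<gamma> x \<le> objective n \<gamma> x + \<epsilon> * g"
      using opt p1 objective_lin[of n \<gamma> x \<epsilon> dd] g_def by auto
    moreover have "objective n \<gamma> x \<le> objective n \<gamma> x + (- \<epsilon>) * g"
      using opt p2 objective_lin[of n \<gamma> x "- \<epsilon>" dd] g_def by auto
    ultimately have "\<epsilon> * g = 0" by linarith
    then have "objective n \<gamma> (\<lambda>i. x i + \<epsilon> * dd i) = objective n \<gamma> x"
      using objective_lin[of n \<gamma> x \<epsilon> dd] g_def by simp
    then have "\<forall>i<n. x i + \<epsilon> * dd i = x i" using uniq p1 by blast
    then have dz: "\<forall>i<n. dd i = 0" using \<epsilon>pos by simp
    obtain v where vX: "v \<in> X" and dv: "d v \<noteq> 0" using dnz by blast
    then obtain i where "v = Inl i" "i < n" using XInl by blast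
    then show False using dz dv dd_def by simp
  qed
qed


end
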